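(* Consider the repeated pursuit-evasion game described in the context, in which the defender uses Exp3.M-VP with parameter $\eta=\min\{1,\sqrt{Na\ln(N/b)/((a+(e-2)b)bT)}\}$ and the attacker uses a no-regret algorithm, and neither player knows the algorithm used by the other. If the number of scanned locations $(M_t)$ is a wide-sense stationary process with mean $\nu$, then the average reward of the defender over an infinite horizon, $\bar s_\infty:=\liminf_{T\to\infty}\mathbb{E}\big[\frac1T\sum_{t=1}^T s^J(t)\big]$, satisfies $\bar s_\infty=\frac{\nu}{N}$.
   Context: Game: there are $N$ locations $\mathcal{N}=\{1,\dots,N\}$ and integers $1\le a\le b<N$. At each discrete time $t$, an attacker selects one location $I_t\in\mathcal{N}$ to compromise and, simultaneously, a defender selects a set $J_t\subset\mathcal{N}$ of $M_t$ locations to scan, where $M_t\in\{a,\dots,b\}$ is given exogenously. Let $y_k(t)=1$ if $I_t=k$ and $0$ otherwise, and $x_k(t)=1$ if $k\notin J_t$ and $0$ otherwise. The attacker's reward is $r^I(t)=x_{I_t}(t)$ and the defender's reward is $s^J(t)=\sum_{j\in J_t}y_j(t)$; each player observes only its own reward for its chosen action(s). A no-regret algorithm for the attacker is one whose expected total reward is at least $\max_{k\in\mathcal{N}}\sum_{t=1}^T x_k(t)-o(T)$. Algorithm Exp3.M-VP with parameter $\eta\in(0,1]$ (for the defender, treating $y_i(t)$ as rewards): $w_i(1)=1$. At round $t$: receive $M_t$; if $\max_j w_j(t)\ge(\frac1{M_t}-\frac\eta N)\sum_i w_i(t)/(1-\eta)$, choose $\kappa_t$ with $\kappa_t/(\sum_{i:w_i(t)\ge\kappa_t}\kappa_t+\sum_{i:w_i(t)<\kappa_t}w_i(t))=(\frac1{M_t}-\frac\eta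 N)/(1-\eta)$, let $S_0(t)=\{i:w_i(t)\ge\kappa_t\}$ and $w'_i(t)=\kappa_t$ on $S_0(t)$; else $S_0(t)=\emptyset$. Let $w'_i(t)=w_i(t)$ off $S_0(t)$. Set $\hat\alpha_i(t)=M_t((1-\eta)w'_i(t)/\sum_j w'_j(t)+\eta/N)$; draw $J_t$, $|J_t|=M_t$, with $P(i\in J_t)=\hat\alpha_i(t)$ (dependent rounding); observe $y_i(t)$, $i\in J_t$; $\hat y_i(t)=y_i(t)/\hat\alpha_i(t)$ if $i\in J_t$, else $0$; $w_i(t+1)=w_i(t)\exp(M_t\eta\hat y_i(t)/N)$ if $i\notin S_0(t)$, else unchanged. *)

theory Defs
  imports "HOL-Probability.Probability" "HOL-Library.Landau_Symbols"
begin

text \<open>A history is the list of past rounds (I_s, J_s): attacked location and scanned set.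
  The attacker only observes its own actions and rewards r = x_{I_s}(s) = (I_s not in J_s).
  Attacker and defender move simultaneously (independently given the history).\<close>

primrec play :: "((nat \<times> bool) list \<Rightarrow> nat pmf) \<Rightarrow> ((nat \<times> nat set) list \<Rightarrow> nat set pmf)
    \<Rightarrow> nat \<Rightarrow> (nat \<times> nat set) list pmf" where
  "play att env 0 = return_pmf []"
| "play att env (Suc t) =
     bind_pmf (play att env t) (\<lambda>h.
       bind_pmf (att (map (\<lambda>(i, J). (i, i \<notin> J)) h)) (\<lambda>i.
         bind_pmf (env h) (\<lambda>J. return_pmf (h @ [(i, J)]))))"

definition att_total :: "(nat \<times> nat set) list \<Rightarrow> real" where
  "att_total h = sum_list (map (\<lambda>(i, J). if i \<notin> J then 1 else 0) h)"

definition loc_total :: "nat \<Rightarrow> (nat \<times> nat set) list \<Rightarrow> real" where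
  "loc_total k h = sum_list (map (\<lambda>(i, J). if k \<notin> J then 1 else 0) h)"

definition def_total :: "(nat \<times> nat set) list \<Rightarrow> real" where
  "def_total h = sum_list (map (\<lambda>(i, J). \<Sum>j\<in>J. if i = j then 1 else 0) h)"

text \<open>No-regret attacker algorithm (the attacker may know the horizon T; att T is its
  behavioural strategy for horizon T).\<close>
definition attacker_no_regret :: "nat \<Rightarrow> (nat \<Rightarrow> (nat \<times> bool) list \<Rightarrow> nat pmf) \<Rightarrow> bool" where
  "attacker_no_regret N att \<longleftrightarrow>
     (\<forall>T h. set_pmf (att T h) \<subseteq> {1..N}) \<and>
     (\<exists>g :: nat \<Rightarrow> real. g \<in> o(\<lambda>T. real T) \<and>
        (\<forall>T env. Max ((\<lambda>k. measure_pmf.expectation (play (att T) env T) (loc_total k)) ` {1..N})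
                   - g T
                 \<le> measure_pmf.expectation (play (att T) env T) att_total))"

definition kappa :: "real \<Rightarrow> nat \<Rightarrow> nat \<Rightarrow> (nat \<Rightarrow> real) \<Rightarrow> real" where
  "kappa \<eta> N m w = (SOME \<kappa>. \<kappa> / ((\<Sum>i\<in>{i\<in>{1..N}. w i \<ge> \<kappa>}. \<kappa>) + (\<Sum>i\<in>{i\<in>{1..N}. w i < \<kappa>}. w i))
                         = (1 / real m - \<eta> / real N) / (1 - \<eta>))"

definition S0 :: "real \<Rightarrow> nat \<Rightarrow> nat \<Rightarrow> (nat \<Rightarrow> real) \<Rightarrow> nat set" where
  "S0 \<eta> N m w =
     (if Max (w ` {1..N}) \<ge> (1 / real m - \<eta> / real N) * (\<Sum>i\<in>{1..N}. w i) / (1 - \<eta>)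
      then {i\<in>{1..N}. w i \<ge> kappa \<eta> N m w} else {})"

definition wprime :: "real \<Rightarrow> nat \<Rightarrow> nat \<Rightarrow> (nat \<Rightarrow> real) \<Rightarrow> nat \<Rightarrow> real" where
  "wprime \<eta> N m w i = (if i \<in> S0 \<eta> N m w then kappa \<eta> N m w else w i)"

definition alpha_hat :: "real \<Rightarrow> nat \<Rightarrow> nat \<Rightarrow> (nat \<Rightarrow> real) \<Rightarrow> nat \<Rightarrow> real" where
  "alpha_hat \<eta> N m w i =
     real m * ((1 - \<eta>) * wprime \<eta> N m w i / (\<Sum>j\<in>{1..N}. wprime \<eta> N m w j) + \<eta> / real N)"

definition exp3_step :: "real \<Rightarrow> nat \<Rightarrow> nat \<Rightarrow> (nat \<Rightarrow> real) \<Rightarrow> nat \<Rightarrow> nat set \<Rightarrow> nat \<Rightarrow> real" where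
  "exp3_step \<eta> N m w I J i =
     (let y_hat = (if i \<in> J then (if I = i then 1 else 0) / alpha_hat \<eta> N m w i else 0)
      in if i \<in> S0 \<eta> N m w then w i else w i * exp (real m * \<eta> * y_hat / real N))"

text \<open>weights w(t) at round t = length h + 1, given the M-sequence ms (rounds numbered from 1)\<close>
definition exp3_weights :: "real \<Rightarrow> nat \<Rightarrow> (nat \<Rightarrow> nat) \<Rightarrow> (nat \<times> nat set) list \<Rightarrow> nat \<Rightarrow> real" where
  "exp3_weights \<eta> N ms h =
     foldl (\<lambda>w p. exp3_step \<eta> N (ms (fst p)) w (fst (snd p)) (snd (snd p)))
       (\<lambda>_. 1) (zip [1..<length h + 1] h)"

definition valid_rounding :: "nat \<Rightarrow> ((nat \<Rightarrow> real) \<Rightarrow> nat \<Rightarrow> nat set pmf) \<Rightarrow> bool" where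
  "valid_rounding N rnd \<longleftrightarrow>
     (\<forall>p m. m \<le> N \<and> (\<forall>i\<in>{1..N}. 0 \<le> p i \<and> p i \<le> 1) \<and> (\<Sum>i\<in>{1..N}. p i) = real m \<longrightarrow>
        set_pmf (rnd p m) \<subseteq> {J. J \<subseteq> {1..N} \<and> card J = m} \<and>
        (\<forall>i\<in>{1..N}. measure_pmf.prob (rnd p m) {J. i \<in> J} = p i))"

definition exp3mvp :: "real \<Rightarrow> nat \<Rightarrow> ((nat \<Rightarrow> real) \<Rightarrow> nat \<Rightarrow> nat set pmf) \<Rightarrow> (nat \<Rightarrow> nat)
    \<Rightarrow> (nat \<times> nat set) list \<Rightarrow> nat set pmf" where
  "exp3mvp \<eta> N rnd ms h =
     (let m = ms (length h + 1) in rnd (alpha_hat \<eta> N m (exp3_weights \<eta> N ms h)) m)"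

definition eta_T :: "nat \<Rightarrow> nat \<Rightarrow> nat \<Rightarrow> nat \<Rightarrow> real" where
  "eta_T N a b T = min 1 (sqrt (real N * real a * ln (real N / real b) /
                               ((real a + (exp 1 - 2) * real b) * real b * real T)))"

definition wide_sense_stationary :: "'w measure \<Rightarrow> (nat \<Rightarrow> 'w \<Rightarrow> nat) \<Rightarrow> real \<Rightarrow> bool" where
  "wide_sense_stationary P X \<nu> \<longleftrightarrow>
     (\<forall>t\<ge>1. integrable P (\<lambda>\<omega>. (real (X t \<omega>))\<^sup>2)) \<and>
     (\<forall>t\<ge>1. (\<integral>\<omega>. real (X t \<omega>) \<partial>P) = \<nu>) \<and>
     (\<forall>s t h. 1 \<le> s \<longrightarrow> 1 \<le> t \<longrightarrow>
        (\<integral>\<omega>. (real (X s \<omega>) - \<nu>) * (real (X (s + h) \<omega>) - \<nu>) \<partial>P)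
        = (\<integral>\<omega>. (real (X t \<omega>) - \<nu>) * (real (X (t + h) \<omega>) - \<nu>) \<partial>P))"

end

theory Submission
  imports Defs
begin

lemma kappa_exists:
  fixes w :: "nat \<Rightarrow> real" and N :: nat and c :: real
  assumes N: "N \<ge> 1" and wpos: "\<And>i. i \<in> {1..N} \<Longrightarrow> w i > 0"
    and c1: "c \<ge> 1 / real N" and c2: "Max (w ` {1..N}) \<ge> c * (\<Sum>i\<in>{1..N}. w i)"
  shows "\<exists>\<kappa>. \<kappa> / ((\<Sum>i\<in>{i\<in>{1..N}. w i \<ge> \<kappa>}. \<kappa>) + (\<Sum>i\<in>{i\<in>{1..N}. w i < \<kappa>}. w i)) = c"
proof -
  define f where "f x = x / (\<Sum>i\<in>{1..N}. min (w i) x)" for x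
  define lo where "lo = Min (w ` {1..N})"
  define hi where "hi = Max (w ` {1..N})"
  have ne: "{1..N} \<noteq> {}" using N by auto
  have lo_pos: "lo > 0" unfolding lo_def using ne wpos by (subst Min_gr_iff) auto
  have lo_le: "\<And>i. i \<in> {1..N} \<Longrightarrow> lo \<le> w i" unfolding lo_def by auto
  have le_hi: "\<And>i. i \<in> {1..N} \<Longrightarrow> w i \<le> hi" unfolding hi_def by auto
  have lohi: "lo \<le> hi" using lo_le le_hi ne by (meson all_not_in_conv order_trans)
  have fl: "f lo = 1 / real N"
  proof -
    have "(\<Sum>i\<in>{1..N}. min (w i) lo) = (\<Sum>i\<in>{1..N}. lo)"
      using lo_le by (intro sum.cong) (force simp: min_def)+
    then show ?thesis unfolding f_def using lo_pos N by simp
  qed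
  have fh: "f hi = hi / (\<Sum>i\<in>{1..N}. w i)"
  proof -
    have "(\<Sum>i\<in>{1..N}. min (w i) hi) = (\<Sum>i\<in>{1..N}. w i)"
      by (rule sum.cong) (auto simp: le_hi min_def)
    then show ?thesis unfolding f_def by simp
  qed
  have Wpos: "(\<Sum>i\<in>{1..N}. w i) > 0" using ne wpos by (intro sum_pos) auto
  have "c \<le> f hi" unfolding fh using c2 Wpos hi_def by (simp add: pos_le_divide_eq)
  moreover have "f lo \<le> c" using fl c1 by simp
  moreover have "continuous_on {lo..hi} f"
  proof -
    have "\<And>x. x \<in> {lo..hi} \<Longrightarrow> (\<Sum>i\<in>{1..N}. min (w i) x) \<noteq> 0"
    proof -
      fix x assume "x \<in> {lo..hi}"
      then have "x > 0" using lo_pos by auto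
      then have "(\<Sum>i\<in>{1..N}. min (w i) x) > 0" using ne wpos by (intro sum_pos) auto
      then show "(\<Sum>i\<in>{1..N}. min (w i) x) \<noteq> 0" by simp
    qed
    then show ?thesis unfolding f_def by (intro continuous_intros) auto
  qed
  ultimately obtain x where x: "lo \<le> x" "x \<le> hi" "f x = c" using IVT'[of f lo c hi] lohi by blast
  have "(\<Sum>i\<in>{1..N}. min (w i) x) = (\<Sum>i\<in>{i\<in>{1..N}. w i \<ge> x}. x) + (\<Sum>i\<in>{i\<in>{1..N}. w i < x}. w i)"
  proof -
    have "(\<Sum>i\<in>{1..N}. min (w i) x) = (\<Sum>i\<in>{1..N}. if w i \<ge> x then x else w i)"
      by (rule sum.cong) (auto simp: min_def)
    also have "\<dots> = (\<Sum>i\<in>{1..N} \<inter> {i. w i \<ge> x}. x) + (\<Sum>i\<in>{1..N} \<inter> - {i. w i \<ge> x}. w i)"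
      by (rule sum.If_cases) simp
    also have "{1..N} \<inter> {i. w i \<ge> x} = {i\<in>{1..N}. w i \<ge> x}" by auto
    also have "{1..N} \<inter> - {i. w i \<ge> x} = {i\<in>{1..N}. w i < x}" by auto
    finally show ?thesis .
  qed
  then show ?thesis using x(3) unfolding f_def by metis
qed

lemma alpha_props:
  fixes w :: "nat \<Rightarrow> real" and N m :: nat and \<eta> :: real
  assumes m1: "1 \<le> m" and mN: "m < N" and e0: "0 < \<eta>" and e1: "\<eta> < 1"
    and wpos: "\<And>i. i \<in> {1..N} \<Longrightarrow> w i > 0"
  shows "S0 \<eta> N m w \<subseteq> {1..N}"
    and "\<And>i. i \<in> S0 \<eta> N m w \<Longrightarrow> alpha_hat \<eta> N m w i = 1"
    and "\<And>i. i \<in> {1..N} \<Longrightarrow> real m * \<eta> / real N \<le> alpha_hat \<eta> N m w i \<and> alpha_hat \<eta> N m w i \<le> 1"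
    and "(\<Sum>i\<in>{1..N}. alpha_hat \<eta> N m w i) = real m"
    and "\<And>i. i \<in> {1..N} \<Longrightarrow> i \<notin> S0 \<eta> N m w \<Longrightarrow>
           w i / (\<Sum>j\<in>{1..N}. w j) \<le> alpha_hat \<eta> N m w i / (real m * (1 - \<eta>))"
proof -
  define c where "c = (1 / real m - \<eta> / real N) / (1 - \<eta>)"
  define W where "W = (\<Sum>j\<in>{1..N}. w j)"
  define Wp where "Wp = (\<Sum>j\<in>{1..N}. wprime \<eta> N m w j)"
  have ne: "{1..N} \<noteq> {}" using m1 mN by auto
  have Npos: "real N > 0" using mN by simp
  have mpos: "real m > 0" using m1 by simp
  have Wpos: "W > 0" unfolding W_def using ne wpos by (intro sum_pos) auto
  have cgt: "c > 1 / real N"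
  proof -
    have "1 / real N < 1 / real m" using m1 mN by (simp add: frac_less2)
    then have "(1 - \<eta>) / real N < 1 / real m - \<eta> / real N" using e1
      by (simp add: diff_divide_distrib)
    then show ?thesis unfolding c_def using e1 by (simp add: pos_less_divide_eq mult.commute)
  qed
  have cgt0: "c > 0" using cgt Npos by (meson less_trans divide_pos_pos zero_less_one)
  have cm: "(1 - \<eta>) * c + \<eta> / real N = 1 / real m" unfolding c_def using e1 by simp
  have S0sub: "S0 \<eta> N m w \<subseteq> {1..N}" unfolding S0_def by auto
  show "S0 \<eta> N m w \<subseteq> {1..N}" by (rule S0sub)
  have main: "(\<forall>i\<in>{1..N}. 0 < wprime \<eta> N m w i \<and> wprime \<eta> N m w i \<le> w i) \<and>
      (\<forall>i\<in>S0 \<eta> N m w. wprime \<eta> N m w i / Wp = c) \<and>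
      (\<forall>i\<in>{1..N}. i \<notin> S0 \<eta> N m w \<longrightarrow> wprime \<eta> N m w i = w i \<and> w i / Wp \<le> c)"
  proof (cases "Max (w ` {1..N}) \<ge> (1 / real m - \<eta> / real N) * (\<Sum>i\<in>{1..N}. w i) / (1 - \<eta>)")
    case False
    then have S0e: "S0 \<eta> N m w = {}" unfolding S0_def by simp
    then have wp: "\<And>i. wprime \<eta> N m w i = w i" unfolding wprime_def by simp
    have WpW: "Wp = W" unfolding Wp_def W_def wp ..
    have "\<And>i. i \<in> {1..N} \<Longrightarrow> w i / W \<le> c"
    proof -
      fix i assume i: "i \<in> {1..N}"
      have "w i \<le> Max (w ` {1..N})" using i by auto
      also have "\<dots> < c * W" using False unfolding c_def W_def by (simp add: mult.commute)
      finally show "w i / W \<le> c" using Wpos by (simp add: pos_divide_le_eq)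
    qed
    then show ?thesis using wp WpW S0e wpos by auto
  next
    case True
    define \<kappa> where "\<kappa> = kappa \<eta> N m w"
    have ex: "\<exists>\<kappa>. \<kappa> / ((\<Sum>i\<in>{i\<in>{1..N}. w i \<ge> \<kappa>}. \<kappa>) + (\<Sum>i\<in>{i\<in>{1..N}. w i < \<kappa>}. w i)) = c"
      using True cgt wpos mN by (intro kappa_exists) (auto simp: c_def W_def mult.commute)
    have keq: "\<kappa> / ((\<Sum>i\<in>{i\<in>{1..N}. w i \<ge> \<kappa>}. \<kappa>) + (\<Sum>i\<in>{i\<in>{1..N}. w i < \<kappa>}. w i)) = c"
      unfolding \<kappa>_def kappa_def using someI_ex[OF ex] unfolding c_def .
    have kpos: "\<kappa> > 0"
    proof (rule ccontr)
      assume "\<not> \<kappa> > 0"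
      then have k0: "\<kappa> \<le> 0" by simp
      have a1: "{i\<in>{1..N}. w i \<ge> \<kappa>} = {1..N}" using k0 wpos by force
      have a2: "{i\<in>{1..N}. w i < \<kappa>} = {}" using k0 wpos by force
      have "\<kappa> / (real N * \<kappa>) = c" using keq unfolding a1 a2 by simp
      moreover have "\<kappa> / (real N * \<kappa>) \<le> 1 / real N"
        using k0 by (cases "\<kappa> = 0") auto
      ultimately show False using cgt by simp
    qed
    have S0eq: "S0 \<eta> N m w = {i\<in>{1..N}. w i \<ge> \<kappa>}" unfolding S0_def \<kappa>_def using True by simp
    have wp: "\<And>i. wprime \<eta> N m w i = (if w i \<ge> \<kappa> \<and> i \<in> {1..N} then \<kappa> else w i)"
      unfolding wprime_def S0eq \<kappa>_def by auto
    have "Wp = (\<Sum>i\<in>{1..N}. if w i \<ge> \<kappa> then \<kappa> else w i)" unfolding Wp_def wp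
      by (rule sum.cong) auto
    also have "\<dots> = (\<Sum>i\<in>{1..N} \<inter> {i. w i \<ge> \<kappa>}. \<kappa>) + (\<Sum>i\<in>{1..N} \<inter> - {i. w i \<ge> \<kappa>}. w i)"
      by (rule sum.If_cases) simp
    also have "{1..N} \<inter> {i. w i \<ge> \<kappa>} = {i\<in>{1..N}. w i \<ge> \<kappa>}" by auto
    also have "{1..N} \<inter> - {i. w i \<ge> \<kappa>} = {i\<in>{1..N}. w i < \<kappa>}" by auto
    finally have Wpe: "\<kappa> / Wp = c" using keq by simp
    have wpp: "\<forall>i\<in>{1..N}. 0 < wprime \<eta> N m w i \<and> wprime \<eta> N m w i \<le> w i"
      using wp wpos kpos by auto
    have Wppos: "Wp > 0" unfolding Wp_def using wpp ne by (intro sum_pos) auto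
    have "\<forall>i\<in>{1..N}. i \<notin> S0 \<eta> N m w \<longrightarrow> wprime \<eta> N m w i = w i \<and> w i / Wp \<le> c"
    proof (intro ballI impI conjI)
      fix i assume i: "i \<in> {1..N}" "i \<notin> S0 \<eta> N m w"
      then show "wprime \<eta> N m w i = w i" unfolding wprime_def by simp
      have "w i < \<kappa>" using i S0eq by auto
      then have "w i / Wp \<le> \<kappa> / Wp" using Wppos by (simp add: divide_right_mono)
      then show "w i / Wp \<le> c" using Wpe by simp
    qed
    moreover have "\<forall>i\<in>S0 \<eta> N m w. wprime \<eta> N m w i / Wp = c"
      using Wpe unfolding wprime_def \<kappa>_def by simp
    ultimately show ?thesis using wpp by blast
  qed
  have Wppos: "Wp > 0" unfolding Wp_def using main ne by (intro sum_pos) auto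
  have WpW: "Wp \<le> W" unfolding Wp_def W_def using main by (intro sum_mono) auto
  have ah: "\<And>i. alpha_hat \<eta> N m w i = real m * ((1 - \<eta>) * (wprime \<eta> N m w i / Wp) + \<eta> / real N)"
    unfolding alpha_hat_def Wp_def by simp
  show "\<And>i. i \<in> S0 \<eta> N m w \<Longrightarrow> alpha_hat \<eta> N m w i = 1"
    using main cm mpos unfolding ah by simp
  show "\<And>i. i \<in> {1..N} \<Longrightarrow> real m * \<eta> / real N \<le> alpha_hat \<eta> N m w i \<and> alpha_hat \<eta> N m w i \<le> 1"
  proof
    fix i assume i: "i \<in> {1..N}"
    have "0 < wprime \<eta> N m w i" using main i by auto
    then have "0 \<le> (1 - \<eta>) * (wprime \<eta> N m w i / Wp)" using e1 Wppos by simp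
    then show "real m * \<eta> / real N \<le> alpha_hat \<eta> N m w i" unfolding ah using mpos
      mult_left_mono[of "\<eta> / real N" "(1 - \<eta>) * (wprime \<eta> N m w i / Wp) + \<eta> / real N" "real m"]
      by simp
    show "alpha_hat \<eta> N m w i \<le> 1"
    proof (cases "i \<in> S0 \<eta> N m w")
      case True then show ?thesis using main cm mpos unfolding ah by simp
    next
      case False
      then have "wprime \<eta> N m w i / Wp \<le> c" using main i by auto
      then have "(1 - \<eta>) * (wprime \<eta> N m w i / Wp) + \<eta> / real N \<le> 1 / real m"
        using e1 cm by (metis add_le_cancel_right diff_gt_0_iff_gt mult_le_cancel_left_pos)
      then show ?thesis unfolding ah using mpos by (simp add: pos_le_divide_eq mult.commute)
    qed
  qed
  show "(\<Sum>i\<in>{1..N}. alpha_hat \<eta> N m w i) = real m"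
  proof -
    have "(\<Sum>i\<in>{1..N}. alpha_hat \<eta> N m w i)
        = real m * (\<Sum>i\<in>{1..N}. (1 - \<eta>) / Wp * wprime \<eta> N m w i + \<eta> / real N)"
      unfolding ah sum_distrib_left[symmetric] by simp
    also have "\<dots> = real m * ((1 - \<eta>) / Wp * (\<Sum>i\<in>{1..N}. wprime \<eta> N m w i) + real N * (\<eta> / real N))"
      by (simp add: sum.distrib sum_distrib_left)
    also have "\<dots> = real m" using Wppos Npos unfolding Wp_def[symmetric] by (simp add: field_simps)
    finally show ?thesis .
  qed
  show "\<And>i. i \<in> {1..N} \<Longrightarrow> i \<notin> S0 \<eta> N m w \<Longrightarrow>
           w i / (\<Sum>j\<in>{1..N}. w j) \<le> alpha_hat \<eta> N m w i / (real m * (1 - \<eta>))"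
  proof -
    fix i assume i: "i \<in> {1..N}" "i \<notin> S0 \<eta> N m w"
    then have wpi: "wprime \<eta> N m w i = w i" using main by auto
    have "w i / W \<le> w i / Wp" using WpW Wppos wpos[OF i(1)] by (simp add: frac_le)
    also have "\<dots> \<le> w i / Wp + \<eta> / (real N * (1 - \<eta>))" using e0 e1 Npos by simp
    also have "\<dots> = alpha_hat \<eta> N m w i / (real m * (1 - \<eta>))"
      unfolding ah wpi using mpos e1 Npos by (simp add: field_simps)
    finally show "w i / (\<Sum>j\<in>{1..N}. w j) \<le> alpha_hat \<eta> N m w i / (real m * (1 - \<eta>))"
      unfolding W_def .
  qed
qed

lemma exp_bind_fin:
  fixes h :: "'b \<Rightarrow> real"
  assumes "finite (set_pmf p)" "\<And>x. x \<in> set_pmf p \<Longrightarrow> finite (set_pmf (f x))"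
  shows "measure_pmf.expectation (bind_pmf p f) h = measure_pmf.expectation p (\<lambda>x. measure_pmf.expectation (f x) h)"
  using assms by (subst pmf_expectation_bind[of "set_pmf p"]) (auto simp: integral_measure_pmf[of "set_pmf p"])

lemma play_set_Suc:
  "h \<in> set_pmf (play att env (Suc t)) \<longleftrightarrow> (\<exists>h' i J. h = h' @ [(i, J)] \<and> h' \<in> set_pmf (play att env t)
      \<and> i \<in> set_pmf (att (map (\<lambda>(i, J). (i, i \<notin> J)) h')) \<and> J \<in> set_pmf (env h'))"
  by auto

lemma play_length: "h \<in> set_pmf (play att env t) \<Longrightarrow> length h = t"
  by (induction t arbitrary: h) auto

lemma play_induct_set:
  assumes "P []"
    and "\<And>h i J. h \<in> set_pmf (play att env (length h)) \<Longrightarrow> P h \<Longrightarrow>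
            i \<in> set_pmf (att (map (\<lambda>(i, J). (i, i \<notin> J)) h)) \<Longrightarrow> J \<in> set_pmf (env h) \<Longrightarrow> P (h @ [(i, J)])"
  shows "h \<in> set_pmf (play att env t) \<Longrightarrow> P h"
proof (induction t arbitrary: h)
  case 0 then show ?case using assms(1) by simp
next
  case (Suc t)
  then obtain h' i J where h: "h = h' @ [(i, J)]" "h' \<in> set_pmf (play att env t)"
      "i \<in> set_pmf (att (map (\<lambda>(i, J). (i, i \<notin> J)) h'))" "J \<in> set_pmf (env h')"
    by (auto simp only: play_set_Suc)
  have "length h' = t" using h(2) by (rule play_length)
  then show ?case using assms(2)[of h' i J] h Suc.IH by simp
qed

lemma play_finite:
  assumes "\<And>h. finite (set_pmf (att h))" "\<And>h. finite (set_pmf (env h))"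
  shows "finite (set_pmf (play att env t))"
  using assms by (induction t) auto

lemma play_exp_Suc:
  fixes F :: "(nat \<times> nat set) list \<Rightarrow> real"
  assumes "\<And>h. finite (set_pmf (att h))" "\<And>h. finite (set_pmf (env h))"
  shows "measure_pmf.expectation (play att env (Suc t)) F =
    measure_pmf.expectation (play att env t) (\<lambda>h. measure_pmf.expectation (att (map (\<lambda>(i, J). (i, i \<notin> J)) h))
       (\<lambda>i. measure_pmf.expectation (env h) (\<lambda>J. F (h @ [(i, J)]))))"
  using assms play_finite[OF assms]
  by (simp add: exp_bind_fin)

lemma play_cong:
  assumes "\<And>h. length h < t \<Longrightarrow> env h = env' h"
  shows "play att env t = play att env' t"
  using assms
proof (induction t)
  case 0 then show ?case by simp
next
  case (Suc t)
  have "play att env t = play att env' t" using Suc by simp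
  moreover have "\<And>h. h \<in> set_pmf (play att env t) \<Longrightarrow> env h = env' h"
    using Suc.prems play_length by fastforce
  ultimately show ?case by (auto intro!: bind_pmf_cong)
qed

lemma step_ineq:
  fixes \<alpha> wi W m N \<eta> :: real
  assumes e0: "0 < \<eta>" and e1: "\<eta> < 1" and m0: "m > 0" and N0: "N > 0"
    and a0: "m * \<eta> / N \<le> \<alpha>" and a1: "\<alpha> \<le> 1" and wi0: "wi > 0" and W0: "W > 0"
    and r: "wi / W \<le> \<alpha> / (m * (1 - \<eta>))"
  shows "(1 - 2 * \<eta>) * m / N \<le>
     \<alpha> * (1 - (N * (1 - \<eta>) / \<eta>) * (ln (W - wi + wi * exp (m * \<eta> / (N * \<alpha>))) - ln W - (m * \<eta> / (N * \<alpha>)) / N))"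
proof -
  define z where "z = m * \<eta> / (N * \<alpha>)"
  define K where "K = N * (1 - \<eta>) / \<eta>"
  define r where "r = wi / W"
  have apos: "\<alpha> > 0" using a0 m0 e0 N0 by (meson divide_pos_pos mult_pos_pos order_less_le_trans)
  have z0: "z > 0" unfolding z_def using m0 e0 N0 apos by simp
  have z1: "z \<le> 1" unfolding z_def using a0 N0 apos by (simp add: divide_le_eq_1 pos_divide_le_eq mult.commute)
  have K0: "K > 0" unfolding K_def using e0 e1 N0 by simp
  have r0: "r \<ge> 0" unfolding r_def using wi0 W0 by simp
  have ez: "exp z \<le> 1 + z + z\<^sup>2" using exp_bound z0 z1 by simp
  have ez1: "exp z - 1 \<ge> 0" using z0 by simp
  have eqW: "W - wi + wi * exp z = W * (1 + r * (exp z - 1))" unfolding r_def using W0 by (simp add: field_simps)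
  have pos1: "1 + r * (exp z - 1) > 0" using r0 ez1 by (smt (verit) mult_nonneg_nonneg)
  have Lg: "ln (W - wi + wi * exp z) - ln W = ln (1 + r * (exp z - 1))"
    unfolding eqW using W0 pos1 by (simp add: ln_mult)
  also have "\<dots> \<le> r * (exp z - 1)" using r0 ez1 by (intro ln_add_one_self_le_self) simp
  also have "\<dots> \<le> r * (z + z\<^sup>2)" using r0 ez by (intro mult_left_mono) auto
  also have "\<dots> \<le> \<alpha> / (m * (1 - \<eta>)) * (z + z\<^sup>2)" using r z0 unfolding r_def
    by (intro mult_right_mono) auto
  finally have Lb: "ln (W - wi + wi * exp z) - ln W \<le> \<alpha> / (m * (1 - \<eta>)) * (z + z\<^sup>2)" .
  have id1: "K * \<alpha> * (\<alpha> / (m * (1 - \<eta>)) * (z + z\<^sup>2)) = \<alpha> + m * \<eta> / N"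
    unfolding K_def z_def using e0 e1 m0 N0 apos by (simp add: field_simps power2_eq_square)
  have id2: "K * \<alpha> * (z / N) = (1 - \<eta>) * m / N"
    unfolding K_def z_def using e0 e1 m0 N0 apos by (simp add: field_simps)
  have "K * \<alpha> * (ln (W - wi + wi * exp z) - ln W) \<le> \<alpha> + m * \<eta> / N"
    using Lb K0 apos id1 by (metis mult_left_mono mult_pos_pos less_imp_le)
  moreover have "\<alpha> * (1 - K * (ln (W - wi + wi * exp z) - ln W - z / N))
      = \<alpha> - K * \<alpha> * (ln (W - wi + wi * exp z) - ln W) + K * \<alpha> * (z / N)"
    by (simp add: algebra_simps)
  moreover have "(1 - 2 * \<eta>) * m / N = (1 - \<eta>) * m / N - m * \<eta> / N"
    by (simp add: algebra_simps diff_divide_distrib)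
  ultimately have "(1 - 2 * \<eta>) * m / N \<le> \<alpha> * (1 - K * (ln (W - wi + wi * exp z) - ln W - z / N))"
    using id2 by linarith
  then show ?thesis unfolding z_def K_def .
qed

lemma sum_upd_real:
  fixes f :: "nat \<Rightarrow> real"
  assumes "finite A" "i \<in> A"
  shows "(\<Sum>j\<in>A. if j = i then v else f j) = (\<Sum>j\<in>A. f j) - f i + v"
proof -
  have "(\<Sum>j\<in>A. if j = i then v else f j) = v + (\<Sum>j\<in>A - {i}. if j = i then v else f j)"
    using assms by (subst sum.remove[of A i]) auto
  also have "(\<Sum>j\<in>A - {i}. if j = i then v else f j) = (\<Sum>j\<in>A - {i}. f j)"
    by (rule sum.cong) auto
  also have "(\<Sum>j\<in>A - {i}. f j) = (\<Sum>j\<in>A. f j) - f i"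
    using assms by (subst sum.remove[of A i]) auto
  finally show ?thesis by simp
qed

lemma weights_snoc:
  "exp3_weights \<eta> N ms (h @ [(i, J)]) = exp3_step \<eta> N (ms (length h + 1)) (exp3_weights \<eta> N ms h) i J"
proof -
  have e: "[1..<length (h @ [(i, J)]) + 1] = [1..<length h + 1] @ [length h + 1]" by simp
  have l: "length [1..<length h + 1] = length h" by (simp only: length_upt)
  have z: "zip ([1..<length h + 1] @ [length h + 1]) (h @ [(i, J)]) = zip [1..<length h + 1] h @ zip [length h + 1] [(i, J)]"
    by (rule zip_append[OF l])
  show ?thesis unfolding exp3_weights_def e z
    by (simp only: foldl_append foldl_Cons foldl_Nil zip_Cons_Cons zip_Nil fst_conv snd_conv)
qed

lemma weights_pos: "exp3_weights \<eta> N ms h j > 0"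
proof (induction h arbitrary: j rule: rev_induct)
  case Nil then show ?case by (simp add: exp3_weights_def)
next
  case (snoc p h)
  obtain i J where p: "p = (i, J)" by (cases p)
  show ?case unfolding p weights_snoc exp3_step_def Let_def using snoc by simp
qed

lemma weights_cong:
  "(\<And>k. 1 \<le> k \<Longrightarrow> k \<le> length h \<Longrightarrow> ms k = ms' k) \<Longrightarrow> exp3_weights \<eta> N ms h = exp3_weights \<eta> N ms' h"
proof (induction h rule: rev_induct)
  case Nil then show ?case by (simp add: exp3_weights_def)
next
  case (snoc p h)
  obtain i J where p: "p = (i, J)" by (cases p)
  have "exp3_weights \<eta> N ms h = exp3_weights \<eta> N ms' h" using snoc by simp
  moreover have "ms (length h + 1) = ms' (length h + 1)" using snoc.prems by simp
  ultimately show ?case unfolding p weights_snoc by simp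
qed

lemma step_formula:
  "exp3_step \<eta> N m w i J j = (if j = i \<and> i \<in> J \<and> i \<notin> S0 \<eta> N m w
      then w i * exp (real m * \<eta> / (real N * alpha_hat \<eta> N m w i)) else w j)"
  by (auto simp: exp3_step_def Let_def)

definition Wsum :: "real \<Rightarrow> nat \<Rightarrow> (nat \<Rightarrow> nat) \<Rightarrow> (nat \<times> nat set) list \<Rightarrow> real" where
  "Wsum \<eta> N ms h = (\<Sum>j\<in>{1..N}. exp3_weights \<eta> N ms h j)"

definition Dpot :: "real \<Rightarrow> nat \<Rightarrow> (nat \<Rightarrow> nat) \<Rightarrow> (nat \<times> nat set) list \<Rightarrow> real" where
  "Dpot \<eta> N ms h = ln (Wsum \<eta> N ms h / real N) - (\<Sum>j\<in>{1..N}. ln (exp3_weights \<eta> N ms h j)) / real N"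

definition Fpot :: "real \<Rightarrow> nat \<Rightarrow> (nat \<Rightarrow> nat) \<Rightarrow> (nat \<times> nat set) list \<Rightarrow> real" where
  "Fpot \<eta> N ms h = def_total h - (real N * (1 - \<eta>) / \<eta>) * Dpot \<eta> N ms h"

lemma Dpot_nonneg:
  assumes "N \<ge> 1"
  shows "Dpot \<eta> N ms h \<ge> 0"
proof -
  define w where "w = exp3_weights \<eta> N ms h"
  define W where "W = Wsum \<eta> N ms h"
  have wpos: "\<And>j. w j > 0" unfolding w_def by (rule weights_pos)
  have Wpos: "W > 0" unfolding W_def Wsum_def using assms weights_pos by (intro sum_pos) auto
  have Npos: "real N > 0" using assms by simp
  have "(\<Sum>j\<in>{1..N}. ln (w j / (W / real N))) \<le> (\<Sum>j\<in>{1..N}. w j / (W / real N) - 1)"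
    using wpos Wpos Npos by (intro sum_mono ln_le_minus_one) simp
  also have "\<dots> = (\<Sum>j\<in>{1..N}. w j / (W / real N)) - real N"
    by (simp add: sum_subtractf)
  also have "(\<Sum>j\<in>{1..N}. w j / (W / real N)) = (\<Sum>j\<in>{1..N}. w j) / (W / real N)"
    by (rule sum_divide_distrib[symmetric])
  also have "(\<Sum>j\<in>{1..N}. w j) = W" unfolding W_def Wsum_def w_def ..
  also have "W / (W / real N) - real N = 0" using Wpos Npos by simp
  finally have "(\<Sum>j\<in>{1..N}. ln (w j / (W / real N))) \<le> 0" .
  moreover have "(\<Sum>j\<in>{1..N}. ln (w j / (W / real N))) = (\<Sum>j\<in>{1..N}. ln (w j)) - real N * ln (W / real N)"
  proof -
    have "ln (w j / (W / real N)) = ln (w j) - ln (W / real N)" for j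
      using wpos[of j] Wpos Npos by (intro ln_divide_pos) auto
    then show ?thesis by (simp add: sum_subtractf)
  qed
  ultimately have "(\<Sum>j\<in>{1..N}. ln (w j)) / real N \<le> ln (W / real N)"
    using Npos by (simp add: divide_le_eq mult.commute)
  then show ?thesis unfolding Dpot_def w_def W_def by simp
qed

lemma env_props:
  assumes vr: "valid_rounding N rnd" and m1: "1 \<le> ms (length h + 1)" and mN: "ms (length h + 1) < N"
    and e0: "0 < \<eta>" and e1: "\<eta> < 1"
  shows "set_pmf (exp3mvp \<eta> N rnd ms h) \<subseteq> {J. J \<subseteq> {1..N} \<and> card J = ms (length h + 1)}"
    and "\<And>i. i \<in> {1..N} \<Longrightarrow> measure_pmf.prob (exp3mvp \<eta> N rnd ms h) {J. i \<in> J}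
            = alpha_hat \<eta> N (ms (length h + 1)) (exp3_weights \<eta> N ms h) i"
proof -
  define m where "m = ms (length h + 1)"
  define w where "w = exp3_weights \<eta> N ms h"
  have wpos: "\<And>i. w i > 0" unfolding w_def by (rule weights_pos)
  note ap = alpha_props[of m N \<eta> w, OF m1[folded m_def] mN[folded m_def] e0 e1 wpos]
  have cond: "m \<le> N \<and> (\<forall>i\<in>{1..N}. 0 \<le> alpha_hat \<eta> N m w i \<and> alpha_hat \<eta> N m w i \<le> 1)
      \<and> (\<Sum>i\<in>{1..N}. alpha_hat \<eta> N m w i) = real m"
  proof (intro conjI ballI)
    show "m \<le> N" using mN m_def by simp
    fix i assume i: "i \<in> {1..N}"
    have "0 \<le> real m * \<eta> / real N" using e0 by simp
    then show "0 \<le> alpha_hat \<eta> N m w i" using ap(3)[OF i] by linarith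
    show "alpha_hat \<eta> N m w i \<le> 1" using ap(3)[OF i] by simp
  qed (rule ap(4))
  have env: "exp3mvp \<eta> N rnd ms h = rnd (alpha_hat \<eta> N m w) m"
    unfolding exp3mvp_def Let_def m_def w_def ..
  show "set_pmf (exp3mvp \<eta> N rnd ms h) \<subseteq> {J. J \<subseteq> {1..N} \<and> card J = ms (length h + 1)}"
    using vr cond unfolding valid_rounding_def env m_def by blast
  show "\<And>i. i \<in> {1..N} \<Longrightarrow> measure_pmf.prob (exp3mvp \<eta> N rnd ms h) {J. i \<in> J}
            = alpha_hat \<eta> N (ms (length h + 1)) (exp3_weights \<eta> N ms h) i"
    using vr cond unfolding valid_rounding_def env m_def w_def by blast
qed

lemma def_total_snoc: "finite J \<Longrightarrow> def_total (h @ [(i, J)]) = def_total h + (if i \<in> J then 1 else 0)"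
  unfolding def_total_def by simp

lemma step_exp:
  assumes vr: "valid_rounding N rnd" and m1: "1 \<le> ms (length h + 1)" and mN: "ms (length h + 1) < N"
    and e0: "0 < \<eta>" and e1: "\<eta> < 1" and i: "i \<in> {1..N}"
  shows "Fpot \<eta> N ms h + (1 - 2 * \<eta>) * real (ms (length h + 1)) / real N
     \<le> measure_pmf.expectation (exp3mvp \<eta> N rnd ms h) (\<lambda>J. Fpot \<eta> N ms (h @ [(i, J)]))"
proof -
  define m where "m = ms (length h + 1)"
  define w where "w = exp3_weights \<eta> N ms h"
  define \<alpha> where "\<alpha> = alpha_hat \<eta> N m w i"
  define S where "S = S0 \<eta> N m w"
  define W where "W = Wsum \<eta> N ms h"
  define z where "z = real m * \<eta> / (real N * \<alpha>)"
  define K where "K = real N * (1 - \<eta>) / \<eta>"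
  define X where "X = (if i \<in> S then 1 else 1 - K * (ln (W - w i + w i * exp z) - ln W - z / real N))"
  define p where "p = exp3mvp \<eta> N rnd ms h"
  have wpos: "\<And>i. w i > 0" unfolding w_def by (rule weights_pos)
  note ap = alpha_props[of m N \<eta> w, OF m1[folded m_def] mN[folded m_def] e0 e1 wpos]
  note ep = env_props[of N rnd ms h \<eta>, OF vr m1 mN e0 e1, folded p_def m_def w_def]
  have Npos: "real N > 0" using mN by simp
  have Wdef: "W = (\<Sum>j\<in>{1..N}. w j)" unfolding W_def Wsum_def w_def ..
  have Wpos: "W > 0" unfolding Wdef using wpos i by (intro sum_pos) auto
  have finp: "finite (set_pmf p)"
    using ep(1) by (rule finite_subset) (auto intro: finite_subset[of _ "Pow {1..N}"])
  have key: "Fpot \<eta> N ms (h @ [(i, J)]) = Fpot \<eta> N ms h + X * indicator {J. i \<in> J} J"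
    if J: "J \<in> set_pmf p" for J
  proof -
    have Jsub: "J \<subseteq> {1..N}" using J ep(1) by auto
    then have finJ: "finite J" by (rule finite_subset) simp
    have wts: "exp3_weights \<eta> N ms (h @ [(i, J)]) = (\<lambda>j. if j = i \<and> i \<in> J \<and> i \<notin> S then w i * exp z else w j)"
      unfolding weights_snoc step_formula m_def[symmetric] w_def[symmetric] S_def[symmetric]
        z_def \<alpha>_def by simp
    show ?thesis
    proof (cases "i \<in> J \<and> i \<notin> S")
      case True
      have wts': "exp3_weights \<eta> N ms (h @ [(i, J)]) = (\<lambda>j. if j = i then w i * exp z else w j)"
        unfolding wts using True by simp
      have W': "Wsum \<eta> N ms (h @ [(i, J)]) = W - w i + w i * exp z"
        unfolding Wsum_def wts' Wdef using i by (intro sum_upd_real) auto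
      have L': "(\<Sum>j\<in>{1..N}. ln (exp3_weights \<eta> N ms (h @ [(i, J)]) j)) = (\<Sum>j\<in>{1..N}. ln (w j)) + z"
      proof -
        have "(\<Sum>j\<in>{1..N}. ln (exp3_weights \<eta> N ms (h @ [(i, J)]) j))
            = (\<Sum>j\<in>{1..N}. if j = i then ln (w i * exp z) else ln (w j))"
          unfolding wts' by (rule sum.cong) auto
        also have "\<dots> = (\<Sum>j\<in>{1..N}. ln (w j)) - ln (w i) + ln (w i * exp z)"
          using i by (intro sum_upd_real) auto
        also have "ln (w i * exp z) = ln (w i) + z" using wpos[of i] by (simp add: ln_mult)
        finally show ?thesis by simp
      qed
      have W'pos: "W - w i + w i * exp z > 0" using W' weights_pos[of \<eta> N ms "h @ [(i, J)]"] i
        unfolding Wsum_def by (metis W' Wsum_def atLeastAtMost_iff empty_iff finite_atLeastAtMost sum_pos)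
      have l1: "ln ((W - w i + w i * exp z) / real N) = ln (W - w i + w i * exp z) - ln (real N)"
        using W'pos Npos by (rule ln_divide_pos)
      have l2: "ln (W / real N) = ln W - ln (real N)"
        using Wpos Npos by (rule ln_divide_pos)
      have Dd: "Dpot \<eta> N ms (h @ [(i, J)]) = Dpot \<eta> N ms h + (ln (W - w i + w i * exp z) - ln W - z / real N)"
        unfolding Dpot_def W' L' W_def[symmetric] w_def[symmetric] l1 l2
        by (simp add: add_divide_distrib)
      have ind: "indicator {J. i \<in> J} J = (1::real)" using True by simp
      show ?thesis unfolding Fpot_def def_total_snoc[OF finJ] X_def K_def Dd ind using True
        by (simp add: algebra_simps)
    next
      case False
      have "exp3_weights \<eta> N ms (h @ [(i, J)]) = w" unfolding wts using False by auto
      then have D: "Dpot \<eta> N ms (h @ [(i, J)]) = Dpot \<eta> N ms h"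
        unfolding Dpot_def Wsum_def w_def by simp
      show ?thesis unfolding Fpot_def def_total_snoc[OF finJ] D X_def using False
        by (auto simp: indicator_def)
    qed
  qed
  have "measure_pmf.expectation p (\<lambda>J. Fpot \<eta> N ms (h @ [(i, J)]))
      = measure_pmf.expectation p (\<lambda>J. Fpot \<eta> N ms h + X * indicator {J. i \<in> J} J)"
    by (intro integral_cong_AE AE_pmfI) (auto simp: key)
  also have "\<dots> = Fpot \<eta> N ms h + X * measure_pmf.prob p {J. i \<in> J}"
  proof -
    have "measure_pmf.expectation p (\<lambda>J. Fpot \<eta> N ms h + X * indicator {J. i \<in> J} J)
       = measure_pmf.expectation p (\<lambda>J. Fpot \<eta> N ms h) + measure_pmf.expectation p (\<lambda>J. X * indicator {J. i \<in> J} J)"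
      by (rule Bochner_Integration.integral_add) (rule integrable_measure_pmf_finite[OF finp])+
    also have "measure_pmf.expectation p (\<lambda>J. X * indicator {J. i \<in> J} J) = X * measure_pmf.expectation p (indicator {J. i \<in> J})"
      by (rule integral_mult_right_zero)
    also have "measure_pmf.expectation p (indicator {J. i \<in> J}) = measure_pmf.prob p {J. i \<in> J}"
      by (simp add: Bochner_Integration.integral_indicator)
    finally show ?thesis by simp
  qed
  also have "measure_pmf.prob p {J. i \<in> J} = \<alpha>" unfolding \<alpha>_def using ep(2)[OF i] by simp
  finally have E: "measure_pmf.expectation p (\<lambda>J. Fpot \<eta> N ms (h @ [(i, J)])) = Fpot \<eta> N ms h + X * \<alpha>" .
  have "(1 - 2 * \<eta>) * real m / real N \<le> X * \<alpha>"
  proof (cases "i \<in> S")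
    case True
    then have "\<alpha> = 1" "X = 1" unfolding \<alpha>_def X_def S_def using ap(2) by auto
    moreover have "(1 - 2 * \<eta>) * real m / real N \<le> 1"
    proof -
      have "(1 - 2 * \<eta>) * real m \<le> real m" using e0 mult_right_mono[of "1 - 2 * \<eta>" 1 "real m"] by simp
      also have "\<dots> \<le> real N" using mN m_def by simp
      finally show ?thesis using Npos by (simp add: divide_le_eq_1)
    qed
    ultimately show ?thesis by simp
  next
    case False
    have a: "real m * \<eta> / real N \<le> \<alpha>" "\<alpha> \<le> 1" using ap(3)[OF i] unfolding \<alpha>_def by auto
    have r: "w i / W \<le> \<alpha> / (real m * (1 - \<eta>))" using ap(5)[OF i] False unfolding Wdef \<alpha>_def S_def by auto
    have "(1 - 2 * \<eta>) * real m / real N \<le> \<alpha> * X"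
      unfolding X_def z_def K_def using False
      by (simp only: if_False) (rule step_ineq[OF e0 e1 _ Npos a wpos Wpos r], use m1 m_def in simp)
    then show ?thesis by (simp add: mult.commute)
  qed
  then show ?thesis using E unfolding p_def m_def by simp
qed

lemma fin_att: fixes N :: nat assumes "\<And>h. set_pmf (att' h) \<subseteq> {1..N}" shows "finite (set_pmf (att' h))"
  by (rule finite_subset[OF assms[of h]]) simp

lemma fin_env:
  assumes vr: "valid_rounding N rnd" and msb: "\<And>k. 1 \<le> k \<Longrightarrow> 1 \<le> ms k \<and> ms k < N"
    and e0: "0 < \<eta>" and e1: "\<eta> < 1"
  shows "finite (set_pmf (exp3mvp \<eta> N rnd ms h))"
proof -
  have "set_pmf (exp3mvp \<eta> N rnd ms h) \<subseteq> Pow {1..N}"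
    using env_props(1)[OF vr _ _ e0 e1, of ms h] msb[of "length h + 1"] by auto
  then show ?thesis by (rule finite_subset) simp
qed

lemma lower_bound_F:
  assumes vr: "valid_rounding N rnd" and msb: "\<And>k. 1 \<le> k \<Longrightarrow> 1 \<le> ms k \<and> ms k < N"
    and e0: "0 < \<eta>" and e1: "\<eta> < 1" and attN: "\<And>h. set_pmf (att' h) \<subseteq> {1..N}"
  shows "(1 - 2 * \<eta>) / real N * (\<Sum>k\<in>{1..t}. real (ms k))
     \<le> measure_pmf.expectation (play att' (exp3mvp \<eta> N rnd ms) t) (Fpot \<eta> N ms)"
proof (induction t)
  case 0
  have "Fpot \<eta> N ms [] = 0"
    by (simp add: Fpot_def Dpot_def Wsum_def exp3_weights_def def_total_def)
  then show ?case by simp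
next
  case (Suc t)
  let ?p = "play att' (exp3mvp \<eta> N rnd ms) t"
  let ?c = "(1 - 2 * \<eta>) * real (ms (Suc t)) / real N"
  note fa = fin_att[OF attN] and fe = fin_env[OF vr msb e0 e1]
  have finp: "finite (set_pmf ?p)" by (rule play_finite[OF fa fe])
  have inner: "Fpot \<eta> N ms h + ?c \<le> measure_pmf.expectation (att' (map (\<lambda>(i, J). (i, i \<notin> J)) h))
       (\<lambda>i. measure_pmf.expectation (exp3mvp \<eta> N rnd ms h) (\<lambda>J. Fpot \<eta> N ms (h @ [(i, J)])))"
    if h: "h \<in> set_pmf ?p" for h
  proof -
    have lh: "length h = t" using h by (rule play_length)
    let ?q = "att' (map (\<lambda>(i, J). (i, i \<notin> J)) h)"
    have "Fpot \<eta> N ms h + ?c = measure_pmf.expectation ?q (\<lambda>i. Fpot \<eta> N ms h + ?c)" by simp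
    also have "\<dots> \<le> measure_pmf.expectation ?q
       (\<lambda>i. measure_pmf.expectation (exp3mvp \<eta> N rnd ms h) (\<lambda>J. Fpot \<eta> N ms (h @ [(i, J)])))"
    proof (rule integral_mono_AE)
      show "integrable (measure_pmf ?q) (\<lambda>i. Fpot \<eta> N ms h + ?c)" by (rule integrable_measure_pmf_finite[OF fa])
      show "integrable (measure_pmf ?q) (\<lambda>i. measure_pmf.expectation (exp3mvp \<eta> N rnd ms h) (\<lambda>J. Fpot \<eta> N ms (h @ [(i, J)])))"
        by (rule integrable_measure_pmf_finite[OF fa])
      show "AE i in measure_pmf ?q. Fpot \<eta> N ms h + ?c \<le>
          measure_pmf.expectation (exp3mvp \<eta> N rnd ms h) (\<lambda>J. Fpot \<eta> N ms (h @ [(i, J)]))"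
      proof (rule AE_pmfI)
        fix i assume "i \<in> set_pmf ?q"
        then have i: "i \<in> {1..N}" using attN by blast
        show "Fpot \<eta> N ms h + ?c \<le> measure_pmf.expectation (exp3mvp \<eta> N rnd ms h) (\<lambda>J. Fpot \<eta> N ms (h @ [(i, J)]))"
          using step_exp[OF vr _ _ e0 e1 i, of ms h] msb[of "length h + 1"] lh by simp
      qed
    qed
    finally show ?thesis .
  qed
  have "(1 - 2 * \<eta>) / real N * (\<Sum>k\<in>{1..Suc t}. real (ms k))
      = (1 - 2 * \<eta>) / real N * (\<Sum>k\<in>{1..t}. real (ms k)) + ?c"
    by (simp add: algebra_simps)
  also have "\<dots> \<le> measure_pmf.expectation ?p (Fpot \<eta> N ms) + ?c" using Suc by simp
  also have "\<dots> = measure_pmf.expectation ?p (\<lambda>h. Fpot \<eta> N ms h + ?c)"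
    by (subst Bochner_Integration.integral_add) (auto intro: integrable_measure_pmf_finite[OF finp])
  also have "\<dots> \<le> measure_pmf.expectation ?p (\<lambda>h. measure_pmf.expectation (att' (map (\<lambda>(i, J). (i, i \<notin> J)) h))
       (\<lambda>i. measure_pmf.expectation (exp3mvp \<eta> N rnd ms h) (\<lambda>J. Fpot \<eta> N ms (h @ [(i, J)]))))"
    by (rule integral_mono_AE) (auto intro: integrable_measure_pmf_finite[OF finp] AE_pmfI inner)
  also have "\<dots> = measure_pmf.expectation (play att' (exp3mvp \<eta> N rnd ms) (Suc t)) (Fpot \<eta> N ms)"
    by (rule play_exp_Suc[OF fa fe, symmetric])
  finally show ?case .
qed

lemma lower_bound:
  assumes vr: "valid_rounding N rnd" and msb: "\<And>k. 1 \<le> k \<Longrightarrow> 1 \<le> ms k \<and> ms k < N"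
    and e0: "0 < \<eta>" and e1: "\<eta> < 1" and attN: "\<And>h. set_pmf (att' h) \<subseteq> {1..N}"
  shows "(1 - 2 * \<eta>) / real N * (\<Sum>k\<in>{1..t}. real (ms k))
     \<le> measure_pmf.expectation (play att' (exp3mvp \<eta> N rnd ms) t) def_total"
proof -
  note fa = fin_att[OF attN] and fe = fin_env[OF vr msb e0 e1]
  have finp: "finite (set_pmf (play att' (exp3mvp \<eta> N rnd ms) t))" by (rule play_finite[OF fa fe])
  have N1: "N \<ge> 1" using msb[of 1] by simp
  have "\<And>h. Fpot \<eta> N ms h \<le> def_total h"
  proof -
    fix h
    have "0 \<le> real N * (1 - \<eta>) / \<eta> * Dpot \<eta> N ms h"
      using Dpot_nonneg[OF N1] e0 e1 by simp
    then show "Fpot \<eta> N ms h \<le> def_total h" unfolding Fpot_def by simp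
  qed
  then have "measure_pmf.expectation (play att' (exp3mvp \<eta> N rnd ms) t) (Fpot \<eta> N ms)
      \<le> measure_pmf.expectation (play att' (exp3mvp \<eta> N rnd ms) t) def_total"
    by (intro integral_mono) (auto intro: integrable_measure_pmf_finite[OF finp])
  then show ?thesis using lower_bound_F[where N=N and rnd=rnd and ms=ms and \<eta>=\<eta> and att'=att' and t=t, OF vr msb e0 e1 attN] by simp
qed

lemma count_notin:
  fixes J :: "nat set"
  assumes "J \<subseteq> {1..N}"
  shows "(\<Sum>k\<in>{1..N}. if k \<notin> J then 1 else 0) = real N - real (card J)"
proof -
  have finJ: "finite J" using assms by (rule finite_subset) simp
  have "(\<Sum>k\<in>{1..N}. if k \<notin> J then (1::real) else 0) = (\<Sum>k\<in>{k\<in>{1..N}. k \<notin> J}. 1)"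
    by (rule sum.inter_filter[symmetric]) simp
  also have "{k\<in>{1..N}. k \<notin> J} = {1..N} - J" by auto
  also have "(\<Sum>k\<in>{1..N} - J. (1::real)) = real (card ({1..N} - J))" by simp
  also have "card ({1..N} - J) = N - card J" using assms finJ by (simp add: card_Diff_subset)
  also have "card J \<le> N" using card_mono[OF _ assms] by simp
  then have "real (N - card J) = real N - real (card J)" by simp
  finally show ?thesis .
qed

lemma play_inv:
  assumes vr: "valid_rounding N rnd" and msb: "\<And>k. 1 \<le> k \<Longrightarrow> 1 \<le> ms k \<and> ms k < N"
    and e0: "0 < \<eta>" and e1: "\<eta> < 1" and attN: "\<And>h. set_pmf (att' h) \<subseteq> {1..N}"
    and h: "h \<in> set_pmf (play att' (exp3mvp \<eta> N rnd ms) t)"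
  shows "att_total h + def_total h = real (length h) \<and>
    (\<Sum>k\<in>{1..N}. loc_total k h) = real N * real (length h) - (\<Sum>k\<in>{1..length h}. real (ms k))"
proof (rule play_induct_set[where att=att' and env="exp3mvp \<eta> N rnd ms" and t=t and
   P="\<lambda>h. att_total h + def_total h = real (length h) \<and>
    (\<Sum>k\<in>{1..N}. loc_total k h) = real N * real (length h) - (\<Sum>k\<in>{1..length h}. real (ms k))", OF _ _ h])
  show "att_total [] + def_total [] = real (length []) \<and>
    (\<Sum>k\<in>{1..N}. loc_total k []) = real N * real (length []) - (\<Sum>k\<in>{1..length []}. real (ms k))"
    by (simp add: att_total_def def_total_def loc_total_def)
next
  fix h i J
  assume IH: "att_total h + def_total h = real (length h) \<and>
    (\<Sum>k\<in>{1..N}. loc_total k h) = real N * real (length h) - (\<Sum>k\<in>{1..length h}. real (ms k))"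
    and Jin: "J \<in> set_pmf (exp3mvp \<eta> N rnd ms h)"
  have "set_pmf (exp3mvp \<eta> N rnd ms h) \<subseteq> {J. J \<subseteq> {1..N} \<and> card J = ms (length h + 1)}"
    using env_props(1)[OF vr _ _ e0 e1, of ms h] msb[of "length h + 1"] by simp
  then have J: "J \<subseteq> {1..N}" "card J = ms (length h + 1)" using Jin by auto
  have finJ: "finite J" using J(1) by (rule finite_subset) simp
  have a: "att_total (h @ [(i, J)]) = att_total h + (if i \<notin> J then 1 else 0)"
    by (simp add: att_total_def)
  have l: "\<And>k. loc_total k (h @ [(i, J)]) = loc_total k h + (if k \<notin> J then 1 else 0)"
    by (simp add: loc_total_def)
  have "(\<Sum>k\<in>{1..N}. loc_total k (h @ [(i, J)])) = (\<Sum>k\<in>{1..N}. loc_total k h) + (real N - real (card J))"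
    unfolding l sum.distrib count_notin[OF J(1)] ..
  moreover have "(\<Sum>k\<in>{1..length (h @ [(i, J)])}. real (ms k)) = (\<Sum>k\<in>{1..length h}. real (ms k)) + real (ms (length h + 1))"
    by simp
  ultimately show "att_total (h @ [(i, J)]) + def_total (h @ [(i, J)]) = real (length (h @ [(i, J)])) \<and>
    (\<Sum>k\<in>{1..N}. loc_total k (h @ [(i, J)])) = real N * real (length (h @ [(i, J)])) - (\<Sum>k\<in>{1..length (h @ [(i, J)])}. real (ms k))"
    using IH a def_total_snoc[OF finJ, of h i] J(2)
    by (simp add: algebra_simps)
qed

lemma upper_bound:
  assumes vr: "valid_rounding N rnd" and msb: "\<And>k. 1 \<le> k \<Longrightarrow> 1 \<le> ms k \<and> ms k < N"
    and e0: "0 < \<eta>" and e1: "\<eta> < 1" and attN: "\<And>h. set_pmf (att' h) \<subseteq> {1..N}"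
    and NR: "Max ((\<lambda>k. measure_pmf.expectation (play att' (exp3mvp \<eta> N rnd ms) T) (loc_total k)) ` {1..N}) - G
       \<le> measure_pmf.expectation (play att' (exp3mvp \<eta> N rnd ms) T) att_total"
  shows "measure_pmf.expectation (play att' (exp3mvp \<eta> N rnd ms) T) def_total
     \<le> (\<Sum>k\<in>{1..T}. real (ms k)) / real N + G"
proof -
  let ?p = "play att' (exp3mvp \<eta> N rnd ms) T"
  let ?S = "(\<Sum>k\<in>{1..T}. real (ms k))"
  note fa = fin_att[OF attN] and fe = fin_env[OF vr msb e0 e1]
  have finp: "finite (set_pmf ?p)" by (rule play_finite[OF fa fe])
  note int = integrable_measure_pmf_finite[OF finp]
  have N1: "N \<ge> 1" using msb[of 1] by simp
  have inv: "\<And>h. h \<in> set_pmf ?p \<Longrightarrow> att_total h + def_total h = real T \<and>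
    (\<Sum>k\<in>{1..N}. loc_total k h) = real N * real T - ?S"
  proof -
    fix h assume h: "h \<in> set_pmf ?p"
    have "length h = T" using h by (rule play_length)
    then show "att_total h + def_total h = real T \<and> (\<Sum>k\<in>{1..N}. loc_total k h) = real N * real T - ?S"
      using play_inv[OF vr msb e0 e1 attN h] by simp
  qed
  have Ea: "measure_pmf.expectation ?p att_total = real T - measure_pmf.expectation ?p def_total"
  proof -
    have "measure_pmf.expectation ?p att_total = measure_pmf.expectation ?p (\<lambda>h. real T - def_total h)"
      by (intro integral_cong_AE AE_pmfI) (simp_all add: inv eq_diff_eq)
    also have "\<dots> = real T - measure_pmf.expectation ?p def_total"
      by (subst Bochner_Integration.integral_diff) (auto intro: int)
    finally show ?thesis .
  qed
  have El: "(\<Sum>k\<in>{1..N}. measure_pmf.expectation ?p (loc_total k)) = real N * real T - ?S"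
  proof -
    have "(\<Sum>k\<in>{1..N}. measure_pmf.expectation ?p (loc_total k)) = measure_pmf.expectation ?p (\<lambda>h. \<Sum>k\<in>{1..N}. loc_total k h)"
      by (rule Bochner_Integration.integral_sum[symmetric]) (rule int)
    also have "\<dots> = measure_pmf.expectation ?p (\<lambda>h. real N * real T - ?S)"
    proof (rule integral_cong_AE)
      show "AE h in measure_pmf ?p. (\<Sum>k\<in>{1..N}. loc_total k h) = real N * real T - ?S"
        by (rule AE_pmfI) (drule inv, erule conjunct2)
    qed simp_all
    also have "\<dots> = real N * real T - ?S" by simp
    finally show ?thesis .
  qed
  have "(\<Sum>k\<in>{1..N}. measure_pmf.expectation ?p (loc_total k))
      \<le> real (card {1..N}) * Max ((\<lambda>k. measure_pmf.expectation ?p (loc_total k)) ` {1..N})"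
    by (rule sum_bounded_above) simp
  then have "real N * real T - ?S \<le> real N * Max ((\<lambda>k. measure_pmf.expectation ?p (loc_total k)) ` {1..N})"
    using El by simp
  then have "real T - ?S / real N \<le> Max ((\<lambda>k. measure_pmf.expectation ?p (loc_total k)) ` {1..N})"
    using N1 by (simp add: field_simps)
  then show ?thesis using NR Ea by linarith
qed

lemma exp3mvp_cong:
  assumes "\<And>k. 1 \<le> k \<Longrightarrow> k \<le> length h + 1 \<Longrightarrow> ms k = ms' k"
  shows "exp3mvp \<eta> N rnd ms h = exp3mvp \<eta> N rnd ms' h"
proof -
  have "exp3_weights \<eta> N ms h = exp3_weights \<eta> N ms' h" using assms by (intro weights_cong) auto
  moreover have "ms (length h + 1) = ms' (length h + 1)" using assms by simp
  ultimately show ?thesis unfolding exp3mvp_def Let_def by simp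
qed

lemma tup_meas:
  assumes "\<And>t. Mt t \<in> measurable P (count_space UNIV)"
  shows "(\<lambda>\<omega>. map (\<lambda>t. Mt t \<omega> :: nat) [0..<n]) \<in> measurable P (count_space UNIV)"
proof (induction n)
  case 0 then show ?case by simp
next
  case (Suc n)
  have "(\<lambda>\<omega>. (\<lambda>xs \<omega>. xs @ [Mt n \<omega>]) ((\<lambda>\<omega>. map (\<lambda>t. Mt t \<omega>) [0..<n]) \<omega>) \<omega>) \<in> measurable P (count_space UNIV)"
  proof (rule measurable_compose_countable'[where f="\<lambda>xs \<omega>. xs @ [Mt n \<omega>]" and g="\<lambda>\<omega>. map (\<lambda>t. Mt t \<omega>) [0..<n]" and I=UNIV])
    fix xs :: "nat list" assume "xs \<in> UNIV"
    show "(\<lambda>\<omega>. xs @ [Mt n \<omega>]) \<in> measurable P (count_space UNIV)"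
      using measurable_compose[OF assms[of n], of "\<lambda>k. xs @ [k]" "count_space UNIV"] by simp
  qed (use Suc in auto)
  then show ?case by simp
qed

lemma L_meas:
  assumes "\<And>t. Mt t \<in> measurable P (count_space UNIV)"
  shows "(\<lambda>\<omega>. measure_pmf.expectation (play att' (exp3mvp \<eta> N rnd (\<lambda>t. Mt t \<omega>)) T) (f :: _ \<Rightarrow> real))
     \<in> borel_measurable P"
proof -
  define ext where "ext xs = (\<lambda>k. if k < length xs then xs ! k else (0::nat))" for xs :: "nat list"
  define \<Phi> where "\<Phi> xs = measure_pmf.expectation (play att' (exp3mvp \<eta> N rnd (ext xs)) T) f" for xs
  have "play att' (exp3mvp \<eta> N rnd (\<lambda>t. Mt t \<omega>)) T = play att' (exp3mvp \<eta> N rnd (ext (map (\<lambda>t. Mt t \<omega>) [0..<T + 1]))) T"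
    for \<omega>
  proof (rule play_cong)
    fix h :: "(nat \<times> nat set) list" assume "length h < T"
    then show "exp3mvp \<eta> N rnd (\<lambda>t. Mt t \<omega>) h = exp3mvp \<eta> N rnd (ext (map (\<lambda>t. Mt t \<omega>) [0..<T + 1])) h"
      by (intro exp3mvp_cong) (auto simp del: upt_Suc simp: ext_def nth_map nth_upt)
  qed
  then have eq: "(\<lambda>\<omega>. measure_pmf.expectation (play att' (exp3mvp \<eta> N rnd (\<lambda>t. Mt t \<omega>)) T) f)
     = (\<lambda>\<omega>. \<Phi> (map (\<lambda>t. Mt t \<omega>) [0..<T + 1]))" unfolding \<Phi>_def by simp
  show ?thesis unfolding eq
    by (rule measurable_compose[OF tup_meas[OF assms]]) simp
qed

lemma eta_props:
  fixes N a b :: nat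
  assumes "1 \<le> a" "a \<le> b" "b < N"
  shows "\<And>T. 1 \<le> T \<Longrightarrow> 0 < eta_T N a b T" and "(\<lambda>T. eta_T N a b T) \<longlonglongrightarrow> 0"
proof -
  define X where "X = real N * real a * ln (real N / real b)"
  define Y where "Y = (real a + (exp 1 - 2) * real b) * real b"
  have X: "X > 0" unfolding X_def using assms by (intro mult_pos_pos ln_gt_zero) auto
  have e2: "exp 1 - 2 \<ge> (0::real)" using exp_ge_add_one_self[of 1] by simp
  have Y: "Y > 0" unfolding Y_def using assms e2
    by (intro mult_pos_pos add_pos_nonneg mult_nonneg_nonneg) auto
  have eta: "eta_T N a b T = min 1 (sqrt (X / (Y * real T)))" for T
    unfolding eta_T_def X_def Y_def by (simp add: mult.assoc)
  show "\<And>T. 1 \<le> T \<Longrightarrow> 0 < eta_T N a b T" unfolding eta using X Y by simp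
  have "(\<lambda>T. X / Y * inverse (real T)) \<longlonglongrightarrow> X / Y * 0"
    by (intro tendsto_mult tendsto_const lim_inverse_n)
  moreover have "(\<lambda>T. X / Y * inverse (real T)) = (\<lambda>T. X / (Y * real T))"
    by (simp add: divide_inverse mult.assoc)
  ultimately have "(\<lambda>T. X / (Y * real T)) \<longlonglongrightarrow> 0" by simp
  then have "(\<lambda>T. sqrt (X / (Y * real T))) \<longlonglongrightarrow> sqrt 0" by (rule tendsto_real_sqrt)
  then have "(\<lambda>T. min 1 (sqrt (X / (Y * real T)))) \<longlonglongrightarrow> min 1 (sqrt 0)"
    by (intro tendsto_min tendsto_const)
  then show "(\<lambda>T. eta_T N a b T) \<longlonglongrightarrow> 0" unfolding eta by simp
qed

theorem corollary1p2:
  fixes P :: "'w measure" and Mt :: "nat \<Rightarrow> 'w \<Rightarrow> nat" and N a b :: nat and \<nu> :: real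
    and att :: "nat \<Rightarrow> (nat \<times> bool) list \<Rightarrow> nat pmf"
    and rnd :: "(nat \<Rightarrow> real) \<Rightarrow> nat \<Rightarrow> nat set pmf"
  assumes "prob_space P"
    and "1 \<le> a" and "a \<le> b" and "b < N"
    and "\<And>t. Mt t \<in> measurable P (count_space UNIV)"
    and "\<And>t \<omega>. 1 \<le> t \<Longrightarrow> \<omega> \<in> space P \<Longrightarrow> a \<le> Mt t \<omega> \<and> Mt t \<omega> \<le> b"
    and "wide_sense_stationary P Mt \<nu>"
    and "valid_rounding N rnd"
    and "attacker_no_regret N att"
  shows "liminf (\<lambda>T. ereal (\<integral>\<omega>. measure_pmf.expectation
             (play (att T) (exp3mvp (eta_T N a b T) N rnd (\<lambda>t. Mt t \<omega>)) T)
             (\<lambda>h. def_total h / real T) \<partial>P))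
         = ereal (\<nu> / real N)"
proof -
  interpret P: prob_space P by (rule assms(1))
  note vr = assms(8)
  obtain g :: "nat \<Rightarrow> real" where g: "g \<in> o(\<lambda>T. real T)"
    and NRall: "\<And>T env. Max ((\<lambda>k. measure_pmf.expectation (play (att T) env T) (loc_total k)) ` {1..N}) - g T
                 \<le> measure_pmf.expectation (play (att T) env T) att_total"
    and attN: "\<And>T h. set_pmf (att T h) \<subseteq> {1..N}"
    using assms(9) unfolding attacker_no_regret_def by blast
  define L where "L T \<omega> = measure_pmf.expectation
             (play (att T) (exp3mvp (eta_T N a b T) N rnd (\<lambda>t. Mt t \<omega>)) T) (\<lambda>h. def_total h / real T)" for T \<omega>
  define S where "S T \<omega> = (\<Sum>k\<in>{1..T}. real (Mt k \<omega>))" for T \<omega>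
  define u where "u T = (\<integral>\<omega>. L T \<omega> \<partial>P)" for T
  have Npos: "real N > 0" using assms(4) by simp
  have msb: "\<And>k. 1 \<le> k \<Longrightarrow> 1 \<le> Mt k \<omega> \<and> Mt k \<omega> < N" if "\<omega> \<in> space P" for \<omega>
    using assms(2,4) assms(6)[OF _ that] by fastforce
  note eta = eta_props[OF assms(2,3,4)]
  have bounds: "(1 - 2 * eta_T N a b T) / real N * (S T \<omega> / real T) \<le> L T \<omega> \<and>
      L T \<omega> \<le> S T \<omega> / real T / real N + g T / real T"
    if T1: "1 \<le> T" and e1: "eta_T N a b T < 1" and \<omega>: "\<omega> \<in> space P" for T \<omega>
  proof -
    have e0: "0 < eta_T N a b T" using eta(1)[OF T1] .
    have Tpos: "real T > 0" using T1 by simp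
    note lb = lower_bound[where N=N and rnd=rnd and ms="\<lambda>t. Mt t \<omega>" and \<eta>="eta_T N a b T" and att'="att T" and t=T,
       OF vr msb[OF \<omega>] e0 e1 attN]
    note ub = upper_bound[where N=N and rnd=rnd and ms="\<lambda>t. Mt t \<omega>" and \<eta>="eta_T N a b T" and att'="att T" and T=T
       and G="g T", OF vr msb[OF \<omega>] e0 e1 attN NRall]
    have Ld: "L T \<omega> = measure_pmf.expectation (play (att T) (exp3mvp (eta_T N a b T) N rnd (\<lambda>t. Mt t \<omega>)) T) def_total / real T"
      unfolding L_def by simp
    show ?thesis unfolding Ld S_def
      using divide_right_mono[OF lb, of "real T"] divide_right_mono[OF ub, of "real T"] Tpos
      by (simp add: add_divide_distrib mult.commute)
  qed
  have eta_lim: "(\<lambda>T. eta_T N a b T) \<longlonglongrightarrow> 0" by (rule eta(2))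
  have ev: "eventually (\<lambda>T. 1 \<le> T \<and> eta_T N a b T < 1) sequentially"
    using eventually_conj[OF eventually_ge_at_top[of 1] order_tendstoD(2)[OF eta_lim, of 1]]
    by simp
  have Mk_meas: "(\<lambda>\<omega>. real (Mt k \<omega>)) \<in> borel_measurable P" for k
    using measurable_compose[OF assms(5)[of k], of real borel] by simp
  have Mk_int: "integrable P (\<lambda>\<omega>. real (Mt k \<omega>))" if "1 \<le> k" for k
  proof (rule P.integrable_const_bound[where B="real b"])
    show "AE \<omega> in P. norm (real (Mt k \<omega>)) \<le> real b"
      using assms(6)[OF that] by (intro AE_I2) simp
  qed (rule Mk_meas)
  have Mk_val: "(\<integral>\<omega>. real (Mt k \<omega>) \<partial>P) = \<nu>" if "1 \<le> k" for k
    using assms(7) that unfolding wide_sense_stationary_def by blast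
  have S_int: "integrable P (\<lambda>\<omega>. S T \<omega> / real T)" for T
    unfolding S_def using Mk_int by (intro integrable_divide Bochner_Integration.integrable_sum) auto
  have S_val: "(\<integral>\<omega>. S T \<omega> / real T \<partial>P) = \<nu>" if "1 \<le> T" for T
  proof -
    have "(\<integral>\<omega>. S T \<omega> \<partial>P) = (\<Sum>k\<in>{1..T}. (\<integral>\<omega>. real (Mt k \<omega>) \<partial>P))"
      unfolding S_def using Mk_int by (intro Bochner_Integration.integral_sum) auto
    also have "\<dots> = real T * \<nu>" using Mk_val by simp
    finally show ?thesis using that by simp
  qed
  have S_bnd: "0 \<le> S T \<omega> / real T \<and> S T \<omega> / real T \<le> real b" if "1 \<le> T" "\<omega> \<in> space P" for T \<omega>
  proof -
    have "S T \<omega> \<le> (\<Sum>k\<in>{1..T}. real b)" unfolding S_def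
      using assms(6)[OF _ that(2)] by (intro sum_mono) auto
    then have "S T \<omega> \<le> real T * real b" by simp
    moreover have "0 \<le> S T \<omega>" unfolding S_def by (intro sum_nonneg) auto
    ultimately show ?thesis using that(1) by (simp add: divide_le_eq mult.commute)
  qed
  have L_meas': "L T \<in> borel_measurable P" for T
    unfolding L_def by (rule L_meas[OF assms(5)])
  have ubnd: "(1 - 2 * eta_T N a b T) / real N * \<nu> \<le> u T \<and> u T \<le> \<nu> / real N + g T / real T"
    if T: "1 \<le> T" "eta_T N a b T < 1" for T
  proof -
    have e0: "0 < eta_T N a b T" using eta(1)[OF T(1)] .
    have L_int: "integrable P (L T)"
    proof (rule P.integrable_const_bound[where B="real b / real N + \<bar>g T\<bar> / real T"])
      show "AE \<omega> in P. norm (L T \<omega>) \<le> real b / real N + \<bar>g T\<bar> / real T"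
      proof (rule AE_I2)
        fix \<omega> assume \<omega>: "\<omega> \<in> space P"
        define r where "r = S T \<omega> / real T"
        have r: "0 \<le> r" "r \<le> real b" using S_bnd[OF T(1) \<omega>] unfolding r_def by auto
        have B: "(1 - 2 * eta_T N a b T) / real N * r \<le> L T \<omega>" "L T \<omega> \<le> r / real N + g T / real T"
          using bounds[OF T \<omega>] unfolding r_def by auto
        have "- r \<le> (1 - 2 * eta_T N a b T) * r"
        proof -
          have "0 \<le> (2 - 2 * eta_T N a b T) * r" using r T(2) by simp
          then show ?thesis by (simp add: algebra_simps)
        qed
        then have "- r / real N \<le> (1 - 2 * eta_T N a b T) * r / real N"
          using Npos by (rule divide_right_mono[OF _ less_imp_le])
        then have "- r / real N \<le> (1 - 2 * eta_T N a b T) / real N * r" by simp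
        moreover have "r / real N \<le> real b / real N" using r Npos by (simp add: divide_right_mono)
        moreover have "g T / real T \<le> \<bar>g T\<bar> / real T" by (simp add: divide_right_mono)
        moreover have "0 \<le> \<bar>g T\<bar> / real T" by simp
        moreover have "0 \<le> r / real N" using r Npos by simp
        ultimately have "- (real b / real N + \<bar>g T\<bar> / real T) \<le> L T \<omega> \<and> L T \<omega> \<le> real b / real N + \<bar>g T\<bar> / real T"
          using B by linarith
        then show "norm (L T \<omega>) \<le> real b / real N + \<bar>g T\<bar> / real T"
          unfolding real_norm_def by linarith
      qed
    qed (rule L_meas')
    have "(\<integral>\<omega>. (1 - 2 * eta_T N a b T) / real N * (S T \<omega> / real T) \<partial>P) \<le> u T"
      unfolding u_def
    proof (rule integral_mono)
      show "integrable P (\<lambda>\<omega>. (1 - 2 * eta_T N a b T) / real N * (S T \<omega> / real T))"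
        by (rule integrable_mult_right[OF S_int])
      fix \<omega> assume "\<omega> \<in> space P"
      then show "(1 - 2 * eta_T N a b T) / real N * (S T \<omega> / real T) \<le> L T \<omega>"
        using bounds[OF T] by blast
    qed (rule L_int)
    moreover have "(\<integral>\<omega>. (1 - 2 * eta_T N a b T) / real N * (S T \<omega> / real T) \<partial>P) = (1 - 2 * eta_T N a b T) / real N * \<nu>"
      using S_val[OF T(1)] by (simp only: integral_mult_right_zero)
    moreover have "u T \<le> (\<integral>\<omega>. S T \<omega> / real T / real N + g T / real T \<partial>P)"
      unfolding u_def
    proof (rule integral_mono)
      show "integrable P (\<lambda>\<omega>. S T \<omega> / real T / real N + g T / real T)"
        by (intro Bochner_Integration.integrable_add integrable_divide S_int) simp
      fix \<omega> assume "\<omega> \<in> space P"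
      then show "L T \<omega> \<le> S T \<omega> / real T / real N + g T / real T"
        using bounds[OF T] by blast
    qed (rule L_int)
    moreover have "(\<integral>\<omega>. S T \<omega> / real T / real N + g T / real T \<partial>P) = \<nu> / real N + g T / real T"
    proof -
      have "(\<integral>\<omega>. S T \<omega> / real T / real N + g T / real T \<partial>P)
          = (\<integral>\<omega>. S T \<omega> / real T / real N \<partial>P) + (\<integral>\<omega>. g T / real T \<partial>P)"
        by (rule Bochner_Integration.integral_add) (rule integrable_divide[OF S_int], simp)
      also have "(\<integral>\<omega>. S T \<omega> / real T / real N \<partial>P) = (\<integral>\<omega>. S T \<omega> / real T \<partial>P) / real N"
        by (rule integral_divide_zero)
      also have "(\<integral>\<omega>. g T / real T \<partial>P) = g T / real T" by (simp add: P.prob_space)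
      finally show ?thesis unfolding S_val[OF T(1)] .
    qed
    ultimately show ?thesis by simp
  qed
  have lo_lim: "(\<lambda>T. (1 - 2 * eta_T N a b T) / real N * \<nu>) \<longlonglongrightarrow> (1 - 2 * 0) / real N * \<nu>"
    using Npos by (intro tendsto_intros eta_lim) simp
  have g_lim: "(\<lambda>T. g T / real T) \<longlonglongrightarrow> 0" using smalloD_tendsto[OF g] by simp
  have hi_lim: "(\<lambda>T. \<nu> / real N + g T / real T) \<longlonglongrightarrow> \<nu> / real N + 0"
    by (intro tendsto_intros g_lim)
  have "u \<longlonglongrightarrow> \<nu> / real N"
  proof (rule tendsto_sandwich[where f="\<lambda>T. (1 - 2 * eta_T N a b T) / real N * \<nu>" and h="\<lambda>T. \<nu> / real N + g T / real T"])
    show "\<forall>\<^sub>F T in sequentially. (1 - 2 * eta_T N a b T) / real N * \<nu> \<le> u T"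
      using ev by eventually_elim (use ubnd in blast)
    show "\<forall>\<^sub>F T in sequentially. u T \<le> \<nu> / real N + g T / real T"
      using ev by eventually_elim (use ubnd in blast)
  qed (use lo_lim hi_lim in simp_all)
  then have "(\<lambda>T. ereal (u T)) \<longlonglongrightarrow> ereal (\<nu> / real N)" by (rule tendsto_ereal)
  then have "liminf (\<lambda>T. ereal (u T)) = ereal (\<nu> / real N)"
    by (intro lim_imp_Liminf) simp_all
  then show ?thesis unfolding u_def L_def .
qed

end
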